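(* Let $M$ be a smooth manifold, $\nabla$ an affine connection on $TM$ and $\tilde\nabla$ the generalized connection on $E=TM\oplus T^*M$ induced by $\nabla$. The torsions $T^{\tilde\nabla}$ and $T^{\tilde\nabla}_{[\cdot,\cdot]_\nabla}$ are equal, i.e. $T^{\tilde\nabla}(v,w,u)=\langle T^{\tilde\nabla}_{[\cdot,\cdot]_\nabla}(v,w),u\rangle$ for all sections $u,v,w$ of $E$, if and only if both vanish, if and only if $\nabla$ is torsion-free.
   Context: $E$ has sections $X+\xi$, pairing $\langle X+\xi,Y+\eta\rangle=\iota_X\eta+\iota_Y\xi$, Courant bracket $[X+\xi,Y+\eta]_C=[X,Y]+\mathcal L_X\eta-\mathcal L_Y\xi-\tfrac12 d(\iota_X\eta-\iota_Y\xi)$, and bracket $[X+\xi,Y+\eta]_\nabla=[X,Y]+\nabla_X\eta-\nabla_Y\xi$. The induced generalized connection is $\tilde\nabla_{X+\xi}(Y+\eta)=\nabla_XY+\nabla_X\eta$. Its torsion with respect to the Courant bracket is the trilinear form $T^{\tilde\nabla}(v,w,u)=\langle\tilde\nabla_vw-\tilde\nabla_wv-[v,w]_C,u\rangle+\tfrac12(\langle\tilde\nabla_uv,w\rangle-\langle\tilde\nabla_uw,v\rangle)$, and its torsion with respect to $[\cdot,\cdot]_\nabla$ is $T^{\tilde\nabla}_{[\cdot,\cdot]_\nabla}(v,w)=\tilde\nabla_vw-\tilde\nabla_wv-[v,w]_\nabla$. *)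

theory Defs
  imports "HOL-Analysis.Analysis"
begin

fun Ck_on :: "nat \<Rightarrow> 'e::real_normed_vector set \<Rightarrow> ('e \<Rightarrow> 'b::real_normed_vector) \<Rightarrow> bool" where
  "Ck_on 0 S f = continuous_on S f"
| "Ck_on (Suc k) S f =
     (\<exists>f'. (\<forall>x\<in>S. (f has_derivative f' x) (at x)) \<and> (\<forall>v. Ck_on k S (\<lambda>x. f' x v)))"

definition smooth_on :: "'e::real_normed_vector set \<Rightarrow> ('e \<Rightarrow> 'b::real_normed_vector) \<Rightarrow> bool" where
  "smooth_on S f \<longleftrightarrow> (\<forall>k. Ck_on k S f)"

text \<open>A chart is a triple (U, phi, psi): U open in M, phi maps U homeomorphically
  onto the open set phi ` U of the model space 'e, with inverse psi.\<close>
type_synonym ('a,'e) chart = "'a set \<times> ('a \<Rightarrow> 'e) \<times> ('e \<Rightarrow> 'a)"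

definition is_chart :: "('a::topological_space, 'e::euclidean_space) chart \<Rightarrow> bool" where
  "is_chart c \<longleftrightarrow> (case c of (U, \<phi>, \<psi>) \<Rightarrow>
      open U \<and> open (\<phi> ` U) \<and> homeomorphism U (\<phi> ` U) \<phi> \<psi>)"

text \<open>The manifold is the whole space of type 'a (Hausdorff, second countable);
  the smooth structure is given by a smooth atlas A.\<close>
definition smooth_atlas :: "('a::{t2_space,second_countable_topology}, 'e::euclidean_space) chart set \<Rightarrow> bool" where
  "smooth_atlas A \<longleftrightarrow>
     (\<forall>c\<in>A. is_chart c) \<and>
     (\<Union>(U,\<phi>,\<psi>)\<in>A. U) = UNIV \<and>
     (\<forall>(U1,\<phi>1,\<psi>1)\<in>A. \<forall>(U2,\<phi>2,\<psi>2)\<in>A.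
        smooth_on (\<phi>1 ` (U1 \<inter> U2)) (\<phi>2 \<circ> \<psi>1))"

definition smooth_fun :: "('a, 'e::euclidean_space) chart set \<Rightarrow> ('a \<Rightarrow> real) \<Rightarrow> bool" where
  "smooth_fun A f \<longleftrightarrow> (\<forall>(U,\<phi>,\<psi>)\<in>A. smooth_on (\<phi> ` U) (f \<circ> \<psi>))"

text \<open>Smooth vector fields are the derivations of C-infinity(M)
  (extended by 0 outside C-infinity(M) to make them canonical).\<close>
type_synonym 'a vfield = "('a \<Rightarrow> real) \<Rightarrow> ('a \<Rightarrow> real)"
type_synonym 'a form1 = "'a vfield \<Rightarrow> ('a \<Rightarrow> real)"
type_synonym 'a sect = "'a vfield \<times> 'a form1"

definition vfield :: "('a, 'e::euclidean_space) chart set \<Rightarrow> 'a vfield \<Rightarrow> bool" where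
  "vfield A X \<longleftrightarrow>
     (\<forall>f. smooth_fun A f \<longrightarrow> smooth_fun A (X f)) \<and>
     (\<forall>f g. smooth_fun A f \<longrightarrow> smooth_fun A g \<longrightarrow> X (\<lambda>x. f x + g x) = (\<lambda>x. X f x + X g x)) \<and>
     (\<forall>c f. smooth_fun A f \<longrightarrow> X (\<lambda>x. c * f x) = (\<lambda>x. c * X f x)) \<and>
     (\<forall>f g. smooth_fun A f \<longrightarrow> smooth_fun A g \<longrightarrow>
        X (\<lambda>x. f x * g x) = (\<lambda>x. f x * X g x + g x * X f x)) \<and>
     (\<forall>f. \<not> smooth_fun A f \<longrightarrow> X f = (\<lambda>x. 0))"

definition vzero :: "'a vfield" where "vzero = (\<lambda>f x. 0)"
definition vadd :: "'a vfield \<Rightarrow> 'a vfield \<Rightarrow> 'a vfield" where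
  "vadd X Y = (\<lambda>f x. X f x + Y f x)"
definition vsub :: "'a vfield \<Rightarrow> 'a vfield \<Rightarrow> 'a vfield" where
  "vsub X Y = (\<lambda>f x. X f x - Y f x)"
definition vscale :: "('a \<Rightarrow> real) \<Rightarrow> 'a vfield \<Rightarrow> 'a vfield" where
  "vscale h X = (\<lambda>f x. h x * X f x)"

definition lie :: "'a vfield \<Rightarrow> 'a vfield \<Rightarrow> 'a vfield" where
  "lie X Y = (\<lambda>f x. X (Y f) x - Y (X f) x)"

text \<open>Smooth 1-forms: C-infinity(M)-linear maps from vector fields to C-infinity(M)
  (extended by 0 outside the vector fields).\<close>
definition form1 :: "('a, 'e::euclidean_space) chart set \<Rightarrow> 'a form1 \<Rightarrow> bool" where
  "form1 A \<xi> \<longleftrightarrow>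
     (\<forall>X. vfield A X \<longrightarrow> smooth_fun A (\<xi> X)) \<and>
     (\<forall>X Y. vfield A X \<longrightarrow> vfield A Y \<longrightarrow> \<xi> (vadd X Y) = (\<lambda>x. \<xi> X x + \<xi> Y x)) \<and>
     (\<forall>h X. smooth_fun A h \<longrightarrow> vfield A X \<longrightarrow> \<xi> (vscale h X) = (\<lambda>x. h x * \<xi> X x)) \<and>
     (\<forall>X. \<not> vfield A X \<longrightarrow> \<xi> X = (\<lambda>x. 0))"

definition fzero :: "'a form1" where "fzero = (\<lambda>Y x. 0)"
definition fadd :: "'a form1 \<Rightarrow> 'a form1 \<Rightarrow> 'a form1" where
  "fadd \<xi> \<eta> = (\<lambda>Y x. \<xi> Y x + \<eta> Y x)"
definition fsub :: "'a form1 \<Rightarrow> 'a form1 \<Rightarrow> 'a form1" where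
  "fsub \<xi> \<eta> = (\<lambda>Y x. \<xi> Y x - \<eta> Y x)"

definition dfun :: "('a, 'e::euclidean_space) chart set \<Rightarrow> ('a \<Rightarrow> real) \<Rightarrow> 'a form1" where
  "dfun A f = (\<lambda>Y. if vfield A Y then Y f else (\<lambda>x. 0))"

definition iota :: "'a vfield \<Rightarrow> 'a form1 \<Rightarrow> ('a \<Rightarrow> real)" where
  "iota X \<xi> = \<xi> X"

definition lie_form :: "('a, 'e::euclidean_space) chart set \<Rightarrow> 'a vfield \<Rightarrow> 'a form1 \<Rightarrow> 'a form1" where
  "lie_form A X \<eta> = (\<lambda>Y. if vfield A Y then (\<lambda>x. X (\<eta> Y) x - \<eta> (lie X Y) x) else (\<lambda>x. 0))"

definition affine_connection :: "('a, 'e::euclidean_space) chart set \<Rightarrow> ('a vfield \<Rightarrow> 'a vfield \<Rightarrow> 'a vfield) \<Rightarrow> bool" where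
  "affine_connection A nabla \<longleftrightarrow>
     (\<forall>X Y. vfield A X \<longrightarrow> vfield A Y \<longrightarrow> vfield A (nabla X Y)) \<and>
     (\<forall>X1 X2 Y. vfield A X1 \<longrightarrow> vfield A X2 \<longrightarrow> vfield A Y \<longrightarrow>
        nabla (vadd X1 X2) Y = vadd (nabla X1 Y) (nabla X2 Y)) \<and>
     (\<forall>h X Y. smooth_fun A h \<longrightarrow> vfield A X \<longrightarrow> vfield A Y \<longrightarrow>
        nabla (vscale h X) Y = vscale h (nabla X Y)) \<and>
     (\<forall>X Y1 Y2. vfield A X \<longrightarrow> vfield A Y1 \<longrightarrow> vfield A Y2 \<longrightarrow>
        nabla X (vadd Y1 Y2) = vadd (nabla X Y1) (nabla X Y2)) \<and>
     (\<forall>h X Y. smooth_fun A h \<longrightarrow> vfield A X \<longrightarrow> vfield A Y \<longrightarrow>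
        nabla X (vscale h Y) = vadd (vscale (X h) Y) (vscale h (nabla X Y)))"

definition torsion_free :: "('a, 'e::euclidean_space) chart set \<Rightarrow> ('a vfield \<Rightarrow> 'a vfield \<Rightarrow> 'a vfield) \<Rightarrow> bool" where
  "torsion_free A nabla \<longleftrightarrow>
     (\<forall>X Y. vfield A X \<longrightarrow> vfield A Y \<longrightarrow>
        vsub (vsub (nabla X Y) (nabla Y X)) (lie X Y) = vzero)"

definition nabla_form :: "('a, 'e::euclidean_space) chart set \<Rightarrow> ('a vfield \<Rightarrow> 'a vfield \<Rightarrow> 'a vfield)
    \<Rightarrow> 'a vfield \<Rightarrow> 'a form1 \<Rightarrow> 'a form1" where
  "nabla_form A nabla X \<eta> =
     (\<lambda>Y. if vfield A Y then (\<lambda>x. X (\<eta> Y) x - \<eta> (nabla X Y) x) else (\<lambda>x. 0))"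

definition section_E :: "('a, 'e::euclidean_space) chart set \<Rightarrow> 'a sect \<Rightarrow> bool" where
  "section_E A v \<longleftrightarrow> vfield A (fst v) \<and> form1 A (snd v)"

definition szero :: "'a sect" where "szero = (vzero, fzero)"
definition ssub :: "'a sect \<Rightarrow> 'a sect \<Rightarrow> 'a sect" where
  "ssub v w = (vsub (fst v) (fst w), fsub (snd v) (snd w))"

definition pairing :: "'a sect \<Rightarrow> 'a sect \<Rightarrow> ('a \<Rightarrow> real)" where
  "pairing v w = (\<lambda>x. iota (fst v) (snd w) x + iota (fst w) (snd v) x)"

definition courant :: "('a, 'e::euclidean_space) chart set \<Rightarrow> 'a sect \<Rightarrow> 'a sect \<Rightarrow> 'a sect" where
  "courant A v w = (case v of (X, \<xi>) \<Rightarrow> case w of (Y, \<eta>) \<Rightarrow>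
     (lie X Y,
      fsub (fsub (lie_form A X \<eta>) (lie_form A Y \<xi>))
           (dfun A (\<lambda>x. (1/2) * (iota X \<eta> x - iota Y \<xi> x)))))"

definition nabla_bracket :: "('a, 'e::euclidean_space) chart set \<Rightarrow> ('a vfield \<Rightarrow> 'a vfield \<Rightarrow> 'a vfield)
    \<Rightarrow> 'a sect \<Rightarrow> 'a sect \<Rightarrow> 'a sect" where
  "nabla_bracket A nabla v w = (case v of (X, \<xi>) \<Rightarrow> case w of (Y, \<eta>) \<Rightarrow>
     (lie X Y, fsub (nabla_form A nabla X \<eta>) (nabla_form A nabla Y \<xi>)))"

definition gen_conn :: "('a, 'e::euclidean_space) chart set \<Rightarrow> ('a vfield \<Rightarrow> 'a vfield \<Rightarrow> 'a vfield)
    \<Rightarrow> 'a sect \<Rightarrow> 'a sect \<Rightarrow> 'a sect" where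
  "gen_conn A nabla v w = (nabla (fst v) (fst w), nabla_form A nabla (fst v) (snd w))"

definition torsion_courant :: "('a, 'e::euclidean_space) chart set \<Rightarrow> ('a vfield \<Rightarrow> 'a vfield \<Rightarrow> 'a vfield)
    \<Rightarrow> 'a sect \<Rightarrow> 'a sect \<Rightarrow> 'a sect \<Rightarrow> ('a \<Rightarrow> real)" where
  "torsion_courant A nabla v w u =
     (\<lambda>x. pairing (ssub (ssub (gen_conn A nabla v w) (gen_conn A nabla w v)) (courant A v w)) u x
        + (1/2) * (pairing (gen_conn A nabla u v) w x - pairing (gen_conn A nabla u w) v x))"

definition torsion_nabla :: "('a, 'e::euclidean_space) chart set \<Rightarrow> ('a vfield \<Rightarrow> 'a vfield \<Rightarrow> 'a vfield)
    \<Rightarrow> 'a sect \<Rightarrow> 'a sect \<Rightarrow> 'a sect" where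
  "torsion_nabla A nabla v w =
     ssub (ssub (gen_conn A nabla v w) (gen_conn A nabla w v)) (nabla_bracket A nabla v w)"

end

theory Submission
  imports Defs
begin

lemma Ck_const: "Ck_on k S (\<lambda>x. c::real)"
proof (induction k arbitrary: c)
  case 0 then show ?case by simp
next
  case (Suc k) then show ?case
    by (auto intro!: exI[of _ "\<lambda>x v. 0"])
qed

lemma Ck_add: "Ck_on k S f \<Longrightarrow> Ck_on k S g \<Longrightarrow> Ck_on k S (\<lambda>x. f x + (g x::real))"
proof (induction k arbitrary: f g)
  case 0 then show ?case by (simp add: continuous_on_add)
next
  case (Suc k)
  from Suc.prems obtain f' g' where f': "\<forall>x\<in>S. (f has_derivative f' x) (at x)" "\<forall>v. Ck_on k S (\<lambda>x. f' x v)"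
    and g': "\<forall>x\<in>S. (g has_derivative g' x) (at x)" "\<forall>v. Ck_on k S (\<lambda>x. g' x v)" by auto
  show ?case
    apply simp
    apply (rule exI[of _ "\<lambda>x v. f' x v + g' x v"])
    using f' g' Suc.IH by (auto intro: has_derivative_add)
qed

lemma Ck_scale: "Ck_on k S f \<Longrightarrow> Ck_on k S (\<lambda>x. c * (f x::real))"
proof (induction k arbitrary: f)
  case 0 then show ?case by (simp add: continuous_on_mult continuous_on_const)
next
  case (Suc k)
  from Suc.prems obtain f' where f': "\<forall>x\<in>S. (f has_derivative f' x) (at x)" "\<forall>v. Ck_on k S (\<lambda>x. f' x v)"
    by auto
  show ?case
    apply simp
    apply (rule exI[of _ "\<lambda>x v. c * f' x v"])
    using f' Suc.IH by (auto intro: has_derivative_mult_right)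
qed

lemma Ck_down: "Ck_on (Suc k) S f \<Longrightarrow> Ck_on k S f"
proof (induction k arbitrary: f)
  case 0
  then obtain f' where "\<forall>x\<in>S. (f has_derivative f' x) (at x)" by auto
  then show ?case
    by (auto intro!: continuous_at_imp_continuous_on dest: has_derivative_continuous)
next
  case (Suc k)
  then show ?case by (metis Ck_on.simps(2))
qed

lemma Ck_mult: "Ck_on k S f \<Longrightarrow> Ck_on k S g \<Longrightarrow> Ck_on k S (\<lambda>x. f x * (g x::real))"
proof (induction k arbitrary: f g)
  case 0 then show ?case by (simp add: continuous_on_mult)
next
  case (Suc k)
  from Suc.prems obtain f' g' where f': "\<forall>x\<in>S. (f has_derivative f' x) (at x)" "\<forall>v. Ck_on k S (\<lambda>x. f' x v)"
    and g': "\<forall>x\<in>S. (g has_derivative g' x) (at x)" "\<forall>v. Ck_on k S (\<lambda>x. g' x v)" by auto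
  have fk: "Ck_on k S f" "Ck_on k S g" using Suc.prems Ck_down by blast+
  show ?case
    apply simp
    apply (rule exI[of _ "\<lambda>x v. f x * g' x v + f' x v * g x"])
    using f' g' Suc.IH fk by (auto intro!: has_derivative_mult Ck_add)
qed

lemma sf_const: "smooth_fun A (\<lambda>x. c)"
  by (auto simp: smooth_fun_def smooth_on_def o_def Ck_const)

lemma sf_scale: "smooth_fun A f \<Longrightarrow> smooth_fun A (\<lambda>x. c * f x)"
  unfolding smooth_fun_def smooth_on_def o_def
  by (fastforce intro: Ck_scale)

lemma sf_mult: "smooth_fun A f \<Longrightarrow> smooth_fun A g \<Longrightarrow> smooth_fun A (\<lambda>x. f x * g x)"
  unfolding smooth_fun_def smooth_on_def o_def
  by (fastforce intro: Ck_mult)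


lemma sf_add: "smooth_fun A f \<Longrightarrow> smooth_fun A g \<Longrightarrow> smooth_fun A (\<lambda>x. f x + g x)"
  unfolding smooth_fun_def smooth_on_def o_def
  by (fastforce intro: Ck_add)

lemma vf_smooth: "vfield A X \<Longrightarrow> smooth_fun A f \<Longrightarrow> smooth_fun A (X f)"
  by (simp add: vfield_def)
lemma vf_add: "vfield A X \<Longrightarrow> smooth_fun A f \<Longrightarrow> smooth_fun A g \<Longrightarrow> X (\<lambda>x. f x + g x) = (\<lambda>x. X f x + X g x)"
  by (simp add: vfield_def)
lemma vf_scale: "vfield A X \<Longrightarrow> smooth_fun A f \<Longrightarrow> X (\<lambda>x. c * f x) = (\<lambda>x. c * X f x)"
  by (simp add: vfield_def)
lemma vf_mult: "vfield A X \<Longrightarrow> smooth_fun A f \<Longrightarrow> smooth_fun A g \<Longrightarrow> X (\<lambda>x. f x * g x) = (\<lambda>x. f x * X g x + g x * X f x)"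
  by (simp add: vfield_def)
lemma vf_ns: "vfield A X \<Longrightarrow> \<not> smooth_fun A f \<Longrightarrow> X f = (\<lambda>x. 0)"
  by (simp add: vfield_def)
lemma fm_smooth: "form1 A \<xi> \<Longrightarrow> vfield A X \<Longrightarrow> smooth_fun A (\<xi> X)"
  by (simp add: form1_def)
lemma fm_add: "form1 A \<xi> \<Longrightarrow> vfield A X \<Longrightarrow> vfield A Y \<Longrightarrow> \<xi> (vadd X Y) = (\<lambda>x. \<xi> X x + \<xi> Y x)"
  by (simp add: form1_def)
lemma fm_scale: "form1 A \<xi> \<Longrightarrow> smooth_fun A h \<Longrightarrow> vfield A X \<Longrightarrow> \<xi> (vscale h X) = (\<lambda>x. h x * \<xi> X x)"
  by (simp add: form1_def)

lemma vf_zero_fun: "vfield A X \<Longrightarrow> X (\<lambda>x. 0) = (\<lambda>x. 0)"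
proof -
  assume X: "vfield A X"
  have "X (\<lambda>x. 0 * (\<lambda>x. 0) x) = (\<lambda>x. 0 * X (\<lambda>x. 0) x)"
    by (rule vf_scale[OF X sf_const])
  then show ?thesis by simp
qed

lemma vfield_vzero: "vfield A vzero"
  unfolding vfield_def vzero_def by (simp add: sf_const)

lemma vfield_vscale: assumes X: "vfield A X" and h: "smooth_fun A h" shows "vfield A (vscale h X)"
  unfolding vfield_def vscale_def
proof (intro conjI allI impI)
  fix f g d
  assume f: "smooth_fun A f"
  show "smooth_fun A (\<lambda>x. h x * X f x)" by (rule sf_mult[OF h vf_smooth[OF X f]])
  show "(\<lambda>x. h x * X (\<lambda>x. d * f x) x) = (\<lambda>x. d * (h x * X f x))"
    unfolding vf_scale[OF X f] by (simp add: mult.left_commute)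
  assume g: "smooth_fun A g"
  show "(\<lambda>x. h x * X (\<lambda>x. f x + g x) x) = (\<lambda>x. h x * X f x + h x * X g x)"
    unfolding vf_add[OF X f g] by (simp add: distrib_left)
  show "(\<lambda>x. h x * X (\<lambda>x. f x * g x) x) = (\<lambda>x. f x * (h x * X g x) + g x * (h x * X f x))"
    unfolding vf_mult[OF X f g] by (simp add: algebra_simps)
next
  fix f assume "\<not> smooth_fun A f"
  then show "(\<lambda>x. h x * X f x) = (\<lambda>x. 0)" using vf_ns[OF X] by simp
qed

lemma vfield_vadd: assumes X: "vfield A X" and Y: "vfield A Y" shows "vfield A (vadd X Y)"
  unfolding vfield_def vadd_def
proof (intro conjI allI impI)
  fix f g d
  assume f: "smooth_fun A f"
  show "smooth_fun A (\<lambda>x. X f x + Y f x)" by (rule sf_add[OF vf_smooth[OF X f] vf_smooth[OF Y f]])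
  show "(\<lambda>x. X (\<lambda>x. d * f x) x + Y (\<lambda>x. d * f x) x) = (\<lambda>x. d * (X f x + Y f x))"
    unfolding vf_scale[OF X f] vf_scale[OF Y f] by (simp add: distrib_left)
  assume g: "smooth_fun A g"
  show "(\<lambda>x. X (\<lambda>x. f x + g x) x + Y (\<lambda>x. f x + g x) x) = (\<lambda>x. X f x + Y f x + (X g x + Y g x))"
    unfolding vf_add[OF X f g] vf_add[OF Y f g] by (simp add: algebra_simps)
  show "(\<lambda>x. X (\<lambda>x. f x * g x) x + Y (\<lambda>x. f x * g x) x) = (\<lambda>x. f x * (X g x + Y g x) + g x * (X f x + Y f x))"
    unfolding vf_mult[OF X f g] vf_mult[OF Y f g] by (simp add: algebra_simps)
next
  fix f assume "\<not> smooth_fun A f"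
  then show "(\<lambda>x. X f x + Y f x) = (\<lambda>x. 0)" using vf_ns[OF X] vf_ns[OF Y] by simp
qed

lemma vfield_vscale_const: "vfield A X \<Longrightarrow> vfield A (vscale (\<lambda>_. c) X)"
  by (rule vfield_vscale) (simp_all add: sf_const)

lemma vfield_lie: assumes X: "vfield A X" and Y: "vfield A Y" shows "vfield A (lie X Y)"
proof -
  have sX: "\<And>f. smooth_fun A f \<Longrightarrow> smooth_fun A (X f)"
    using vf_smooth[OF X] .
  have aX: "\<And>f g. smooth_fun A f \<Longrightarrow> smooth_fun A g \<Longrightarrow> X (\<lambda>x. f x + g x) = (\<lambda>x. X f x + X g x)"
    using vf_add[OF X] .
  have cX: "\<And>c f. smooth_fun A f \<Longrightarrow> X (\<lambda>x. c * f x) = (\<lambda>x. c * X f x)"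
    using vf_scale[OF X] .
  have mX: "\<And>f g. smooth_fun A f \<Longrightarrow> smooth_fun A g \<Longrightarrow> X (\<lambda>x. f x * g x) = (\<lambda>x. f x * X g x + g x * X f x)"
    using vf_mult[OF X] .
  have nX: "\<And>f. \<not> smooth_fun A f \<Longrightarrow> X f = (\<lambda>x. 0)"
    using vf_ns[OF X] .
  have sY: "\<And>f. smooth_fun A f \<Longrightarrow> smooth_fun A (Y f)"
    using vf_smooth[OF Y] .
  have aY: "\<And>f g. smooth_fun A f \<Longrightarrow> smooth_fun A g \<Longrightarrow> Y (\<lambda>x. f x + g x) = (\<lambda>x. Y f x + Y g x)"
    using vf_add[OF Y] .
  have cY: "\<And>c f. smooth_fun A f \<Longrightarrow> Y (\<lambda>x. c * f x) = (\<lambda>x. c * Y f x)"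
    using vf_scale[OF Y] .
  have mY: "\<And>f g. smooth_fun A f \<Longrightarrow> smooth_fun A g \<Longrightarrow> Y (\<lambda>x. f x * g x) = (\<lambda>x. f x * Y g x + g x * Y f x)"
    using vf_mult[OF Y] .
  have nY: "\<And>f. \<not> smooth_fun A f \<Longrightarrow> Y f = (\<lambda>x. 0)"
    using vf_ns[OF Y] .

  show ?thesis
    unfolding vfield_def
  proof (intro conjI allI impI)
    fix f g c
    assume f: "smooth_fun A f"
    have "lie X Y f = (\<lambda>x. X (Y f) x + (-1) * Y (X f) x)" by (simp add: lie_def)
    moreover have "smooth_fun A (\<lambda>x. X (Y f) x + (-1) * Y (X f) x)"
      by (intro sf_add sf_scale sX sY f)
    ultimately show "smooth_fun A (lie X Y f)" by simp
    show "lie X Y (\<lambda>x. c * f x) = (\<lambda>x. c * lie X Y f x)"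
      using f by (simp add: lie_def cX cY sX sY right_diff_distrib)
    assume g: "smooth_fun A g"
    show "lie X Y (\<lambda>x. f x + g x) = (\<lambda>x. lie X Y f x + lie X Y g x)"
      using f g by (simp add: lie_def aX aY sX sY algebra_simps)
    have "Y (\<lambda>x. f x * g x) = (\<lambda>x. (\<lambda>x. f x * Y g x) x + (\<lambda>x. g x * Y f x) x)" using mY f g by simp
    then have e1: "X (Y (\<lambda>x. f x * g x)) = (\<lambda>x. f x * X (Y g) x + Y g x * X f x + (g x * X (Y f) x + Y f x * X g x))"
      using f g by (simp add: aX sf_mult sY mX)
    have "X (\<lambda>x. f x * g x) = (\<lambda>x. (\<lambda>x. f x * X g x) x + (\<lambda>x. g x * X f x) x)" using mX f g by simp
    then have e2: "Y (X (\<lambda>x. f x * g x)) = (\<lambda>x. f x * Y (X g) x + X g x * Y f x + (g x * Y (X f) x + X f x * Y g x))"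
      using f g by (simp add: aY sf_mult sX mY)
    show "lie X Y (\<lambda>x. f x * g x) = (\<lambda>x. f x * lie X Y g x + g x * lie X Y f x)"
      unfolding lie_def e1 e2 by (simp add: algebra_simps)
  next
    fix f assume "\<not> smooth_fun A f"
    then show "lie X Y f = (\<lambda>x. 0)"
      by (simp add: lie_def nX nY vf_zero_fun[OF X] vf_zero_fun[OF Y])
  qed
qed

lemma form1_fzero: "form1 A fzero"
  by (simp add: form1_def fzero_def sf_const)

lemma form1_dfun: "form1 A (dfun A f)"
  unfolding form1_def
proof (intro conjI allI impI)
  fix X Y h
  assume X: "vfield A X"
  show "smooth_fun A (dfun A f X)"
  proof (cases "smooth_fun A f")
    case True then show ?thesis using X by (simp add: dfun_def vf_smooth)
  next
    case False then show ?thesis using X by (simp add: dfun_def vf_ns sf_const)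
  qed
  assume h: "smooth_fun A h"
  show "dfun A f (vscale h X) = (\<lambda>x. h x * dfun A f X x)"
    using X h vfield_vscale[OF X h] by (simp add: dfun_def vscale_def)
next
  fix X Y assume X: "vfield A X" and Y: "vfield A Y"
  show "dfun A f (vadd X Y) = (\<lambda>x. dfun A f X x + dfun A f Y x)"
    using X Y vfield_vadd[OF X Y] by (simp add: dfun_def vadd_def)
next
  fix X assume "\<not> vfield A X" then show "dfun A f X = (\<lambda>x. 0)" by (simp add: dfun_def)
qed

lemma form_vzero: assumes "form1 A \<zeta>" shows "\<zeta> vzero = (\<lambda>x. 0)"
proof -
  have A': "vscale (\<lambda>_. 0) vzero = vzero" by (simp add: vscale_def vzero_def)
  show ?thesis
    using fm_scale[OF assms sf_const[of A 0] vfield_vzero[of A]] unfolding A' by simp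
qed

lemma form_vsub: assumes e: "form1 A \<eta>" and P: "vfield A P" and Q: "vfield A Q"
  shows "\<eta> (vsub P Q) = (\<lambda>x. \<eta> P x - \<eta> Q x)"
proof -
  have Q': "vfield A (vscale (\<lambda>_. -1) Q)" by (rule vfield_vscale_const[OF Q])
  have "vsub P Q = vadd P (vscale (\<lambda>_. -1) Q)" by (simp add: vsub_def vadd_def vscale_def)
  then have "\<eta> (vsub P Q) = (\<lambda>x. \<eta> P x + \<eta> (vscale (\<lambda>_. -1) Q) x)"
    using fm_add[OF e P Q'] by simp
  moreover have "\<eta> (vscale (\<lambda>_. -1) Q) = (\<lambda>x. (\<lambda>_. -1) x * \<eta> Q x)"
    using fm_scale[OF e sf_const[of A "-1"] Q] by simp
  ultimately show ?thesis by simp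
qed

lemma vf_lin: assumes Z: "vfield A Z" and f: "smooth_fun A f" and g: "smooth_fun A g"
  shows "Z (\<lambda>x. a * f x + b * g x) = (\<lambda>x. a * Z f x + b * Z g x)"
proof -
  have "Z (\<lambda>x. (\<lambda>x. a * f x) x + (\<lambda>x. b * g x) x) = (\<lambda>x. Z (\<lambda>x. a * f x) x + Z (\<lambda>x. b * g x) x)"
    using vf_add[OF Z sf_scale[OF f] sf_scale[OF g]] by simp
  moreover have "Z (\<lambda>x. a * f x) = (\<lambda>x. a * Z f x)" "Z (\<lambda>x. b * g x) = (\<lambda>x. b * Z g x)"
    using vf_scale[OF Z f] vf_scale[OF Z g] by simp_all
  ultimately show ?thesis by simp
qed

lemma tf_lie: assumes "torsion_free A nabla" "vfield A X" "vfield A Y"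
  shows "lie X Y = vsub (nabla X Y) (nabla Y X)"
proof (rule ext, rule ext)
  fix f x
  have "vsub (vsub (nabla X Y) (nabla Y X)) (lie X Y) = vzero" using assms by (simp add: torsion_free_def)
  then have "vsub (vsub (nabla X Y) (nabla Y X)) (lie X Y) f x = vzero f x" by simp
  then have "nabla X Y f x - nabla Y X f x - lie X Y f x = 0" by (simp only: vsub_def vzero_def)
  then show "lie X Y f x = vsub (nabla X Y) (nabla Y X) f x" unfolding vsub_def by linarith
qed

lemma arith6: "0 + (a - b - (c - d) - (a - (b - e) - (c - (d - f)) - (1 / 2 * g + - 1 / 2 * h))) + 1 / 2 * (e + (h - f) - (f + (g - e))) = (0::real)"
  by algebra

lemma TC_zero:
  assumes tf: "torsion_free A nabla" and ac: "affine_connection A nabla"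
    and u: "section_E A u" and v: "section_E A v" and w: "section_E A w"
  shows "torsion_courant A nabla v w u = (\<lambda>x. 0)"
proof -
  obtain X \<xi> where vv: "v = (X, \<xi>)" by (cases v)
  obtain Y \<eta> where ww: "w = (Y, \<eta>)" by (cases w)
  obtain Z \<zeta> where uu: "u = (Z, \<zeta>)" by (cases u)
  have X: "vfield A X" and \<xi>: "form1 A \<xi>" using v vv by (auto simp: section_E_def)
  have Y: "vfield A Y" and \<eta>: "form1 A \<eta>" using w ww by (auto simp: section_E_def)
  have Z: "vfield A Z" and \<zeta>: "form1 A \<zeta>" using u uu by (auto simp: section_E_def)
  have nv: "\<And>P Q. vfield A P \<Longrightarrow> vfield A Q \<Longrightarrow> vfield A (nabla P Q)"
    using ac by (simp add: affine_connection_def)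
  have t0: "vsub (vsub (nabla X Y) (nabla Y X)) (lie X Y) = vzero" using tf X Y by (simp add: torsion_free_def)
  have e1: "\<zeta> (vsub (vsub (nabla X Y) (nabla Y X)) (lie X Y)) = (\<lambda>x. 0)"
    unfolding t0 by (rule form_vzero[OF \<zeta>])
  have e2: "\<eta> (lie X Z) = (\<lambda>x. \<eta> (nabla X Z) x - \<eta> (nabla Z X) x)"
    unfolding tf_lie[OF tf X Z] by (rule form_vsub[OF \<eta> nv[OF X Z] nv[OF Z X]])
  have e3: "\<xi> (lie Y Z) = (\<lambda>x. \<xi> (nabla Y Z) x - \<xi> (nabla Z Y) x)"
    unfolding tf_lie[OF tf Y Z] by (rule form_vsub[OF \<xi> nv[OF Y Z] nv[OF Z Y]])
  have h4: "(\<lambda>x. 1 / 2 * (\<eta> X x - \<xi> Y x)) = (\<lambda>x. (1/2) * \<eta> X x + (-1/2) * \<xi> Y x)"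
    by (rule ext) (simp add: algebra_simps)
  have e4: "Z (\<lambda>x. 1 / 2 * (\<eta> X x - \<xi> Y x)) = (\<lambda>x. (1/2) * Z (\<eta> X) x + (-1/2) * Z (\<xi> Y) x)"
    unfolding h4 by (rule vf_lin[OF Z fm_smooth[OF \<eta> X] fm_smooth[OF \<xi> Y]])
  show ?thesis
    unfolding vv ww uu torsion_courant_def pairing_def ssub_def gen_conn_def courant_def iota_def
      fsub_def lie_form_def nabla_form_def dfun_def
    using X Y Z nv[OF X Y] nv[OF Y X] nv[OF Z X] nv[OF Z Y] nv[OF X Z] nv[OF Y Z]
    apply (simp only: fst_conv snd_conv case_prod_conv)
    apply (simp only: e1 e2 e3 e4 if_True)
    apply (rule ext)
    apply (rule arith6)
    done
qed

lemma TN_zero: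
  assumes tf: "torsion_free A nabla" and v: "section_E A v" and w: "section_E A w"
  shows "torsion_nabla A nabla v w = szero"
proof -
  obtain X \<xi> where vv: "v = (X, \<xi>)" by (cases v)
  obtain Y \<eta> where ww: "w = (Y, \<eta>)" by (cases w)
  have X: "vfield A X" using v vv by (auto simp: section_E_def)
  have Y: "vfield A Y" using w ww by (auto simp: section_E_def)
  have t0: "vsub (vsub (nabla X Y) (nabla Y X)) (lie X Y) = vzero" using tf X Y by (simp add: torsion_free_def)
  show ?thesis
    unfolding vv ww torsion_nabla_def ssub_def gen_conn_def nabla_bracket_def szero_def
    by (simp add: t0 fsub_def fzero_def)
qed

lemma TN_tf:
  assumes h: "\<forall>v w. section_E A v \<longrightarrow> section_E A w \<longrightarrow> torsion_nabla A nabla v w = szero"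
  shows "torsion_free A nabla"
  unfolding torsion_free_def
proof (intro allI impI)
  fix X Y assume X: "vfield A X" and Y: "vfield A Y"
  have "section_E A (X, fzero)" "section_E A (Y, fzero)" using X Y form1_fzero by (auto simp: section_E_def)
  then have "torsion_nabla A nabla (X, fzero) (Y, fzero) = szero" using h by blast
  then have "fst (torsion_nabla A nabla (X, fzero) (Y, fzero)) = vzero" by (simp add: szero_def)
  then show "vsub (vsub (nabla X Y) (nabla Y X)) (lie X Y) = vzero"
    by (simp add: torsion_nabla_def ssub_def gen_conn_def nabla_bracket_def)
qed

lemma pairing_szero: assumes "section_E A u" shows "pairing szero u = (\<lambda>x. 0)"
proof (cases u)
  case (Pair a b)
  then have "form1 A b" using assms by (simp add: section_E_def)
  then show ?thesis using Pair by (simp add: pairing_def szero_def iota_def form_vzero fzero_def)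
qed

lemma TC_tf:
  assumes ac: "affine_connection A nabla"
    and h: "\<forall>u v w. section_E A u \<longrightarrow> section_E A v \<longrightarrow> section_E A w \<longrightarrow>
             torsion_courant A nabla v w u = pairing (torsion_nabla A nabla v w) u"
  shows "torsion_free A nabla"
  unfolding torsion_free_def
proof (intro allI impI)
  fix X Z assume X: "vfield A X" and Z: "vfield A Z"
  have nv: "\<And>P Q. vfield A P \<Longrightarrow> vfield A Q \<Longrightarrow> vfield A (nabla P Q)"
    using ac by (simp add: affine_connection_def)
  have L: "vfield A (lie X Z)" by (rule vfield_lie[OF X Z])
  have V0: "vfield A vzero" by (rule vfield_vzero)
  have key: "lie X Z f x - nabla X Z f x + nabla Z X f x = 0" for f x
  proof (cases "smooth_fun A f")
    case False
    then show ?thesis using vf_ns[OF L] vf_ns[OF nv[OF X Z]] vf_ns[OF nv[OF Z X]] by simp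
  next
    case True
    have sec: "section_E A (X, fzero)" "section_E A (vzero, dfun A f)" "section_E A (Z, fzero)"
      using X Z V0 form1_fzero form1_dfun by (auto simp: section_E_def)
    have H: "torsion_courant A nabla (X, fzero) (vzero, dfun A f) (Z, fzero) x
       = pairing (torsion_nabla A nabla (X, fzero) (vzero, dfun A f)) (Z, fzero) x"
      using h sec by metis
    have sm: "smooth_fun A (X f)" by (rule vf_smooth[OF X True])
    have hz: "(\<lambda>x. 1 / 2 * (X f x - 0)) = (\<lambda>x. 1 / 2 * X f x)" by simp
    have e4: "Z (\<lambda>x. 1 / 2 * (X f x - 0)) = (\<lambda>x. 1 / 2 * Z (X f) x)"
      unfolding hz by (rule vf_scale[OF Z sm])
    show ?thesis
      using H
      unfolding torsion_courant_def pairing_def ssub_def gen_conn_def courant_def iota_def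
        fsub_def lie_form_def nabla_form_def dfun_def torsion_nabla_def nabla_bracket_def
      using X Z V0 L nv[OF X Z] nv[OF Z X]
      apply (simp only: fst_conv snd_conv case_prod_conv)
      apply (simp only: if_True fzero_def)
      apply (simp only: e4 vf_zero_fun[OF Z])
      apply (simp only: right_diff_distrib distrib_left)
      done
  qed
  show "vsub (vsub (nabla X Z) (nabla Z X)) (lie X Z) = vzero"
    using key unfolding vsub_def vzero_def
    by (intro ext) (simp add: algebra_simps)
qed

theorem corollary4p3p1:
  fixes A :: "('a::{t2_space,second_countable_topology}, 'e::euclidean_space) chart set"
    and nabla :: "'a vfield \<Rightarrow> 'a vfield \<Rightarrow> 'a vfield"
  assumes "smooth_atlas A"
    and "affine_connection A nabla"
  shows "((\<forall>u v w. section_E A u \<longrightarrow> section_E A v \<longrightarrow> section_E A w \<longrightarrow>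
             torsion_courant A nabla v w u = pairing (torsion_nabla A nabla v w) u)
          \<longleftrightarrow>
          ((\<forall>u v w. section_E A u \<longrightarrow> section_E A v \<longrightarrow> section_E A w \<longrightarrow>
              torsion_courant A nabla v w u = (\<lambda>x. 0)) \<and>
           (\<forall>v w. section_E A v \<longrightarrow> section_E A w \<longrightarrow> torsion_nabla A nabla v w = szero)))
       \<and>
         (((\<forall>u v w. section_E A u \<longrightarrow> section_E A v \<longrightarrow> section_E A w \<longrightarrow>
              torsion_courant A nabla v w u = (\<lambda>x. 0)) \<and>
           (\<forall>v w. section_E A v \<longrightarrow> section_E A w \<longrightarrow> torsion_nabla A nabla v w = szero))
          \<longleftrightarrow> torsion_free A nabla)"
proof -
  have ac: "affine_connection A nabla" by (rule assms(2))
  let ?EQ = "\<forall>u v w. section_E A u \<longrightarrow> section_E A v \<longrightarrow> section_E A w \<longrightarrow>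
             torsion_courant A nabla v w u = pairing (torsion_nabla A nabla v w) u"
  let ?C0 = "\<forall>u v w. section_E A u \<longrightarrow> section_E A v \<longrightarrow> section_E A w \<longrightarrow>
              torsion_courant A nabla v w u = (\<lambda>x. 0)"
  let ?N0 = "\<forall>v w. section_E A v \<longrightarrow> section_E A w \<longrightarrow> torsion_nabla A nabla v w = szero"
  have tfC: "torsion_free A nabla \<Longrightarrow> ?C0" using TC_zero[OF _ ac] by blast
  have tfN: "torsion_free A nabla \<Longrightarrow> ?N0" using TN_zero by blast
  have part2: "(?C0 \<and> ?N0) \<longleftrightarrow> torsion_free A nabla"
    using tfC tfN TN_tf by blast
  have part1: "?EQ \<longleftrightarrow> (?C0 \<and> ?N0)"
  proof
    assume ?EQ
    then have "torsion_free A nabla" by (rule TC_tf[OF ac])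
    then show "?C0 \<and> ?N0" using tfC tfN by blast
  next
    assume H: "?C0 \<and> ?N0"
    show ?EQ
    proof (intro allI impI)
      fix u v w assume u: "section_E A u" and v: "section_E A v" and w: "section_E A w"
      have n: "torsion_nabla A nabla v w = szero" using H v w by blast
      have c: "torsion_courant A nabla v w u = (\<lambda>x. 0)" using H u v w by blast
      show "torsion_courant A nabla v w u = pairing (torsion_nabla A nabla v w) u"
        unfolding n c pairing_szero[OF u] ..
    qed
  qed
  show ?thesis using part1 part2 by blast
qed

end
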